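(* Let $Q$ be an absolutely continuous stochastic algorithm with Hamiltonian $H$, and suppose that for all $k\in[n]$, $h\in\mathcal{H}$, $y,y'\in\mathcal{X}$ and $\mathbf{x}\in\mathcal{X}^n$ we have $D^k_{y,y'}H(h,\mathbf{x})\le c$ and $h(y)\in[0,b]$. For $h\in\mathcal{H}$ let $v(h)=\mathbb{E}[(h(X)-\mathbb{E}[h(X')])^2]$. Then for $\delta>0$, with probability at least $1-\delta$ in $\mathbf{X}\sim\mu^n$ and $h\sim Q_{\mathbf{X}}$, $$\Delta(h,\mathbf{X})\le 2\sqrt{v(h)\left(c^2+\frac{\ln(1/\delta)}{n}\right)}+b\left(c^2+\frac{\ln(1/\delta)}{n}\right).$$
   Context: $\mathcal{X}$ is a measurable space with probability measure $\mu$, $\mathbf{X}=(X_1,\dots,X_n)\sim\mu^n$, $X,X'\sim\mu$ independent. $\mathcal{H}$ is a measurable space of measurable functions $h:\mathcal{X}\to[0,\infty)$ with nonnegative a-priori measure $\pi$. A stochastic algorithm $Q:\mathbf{x}\mapsto Q_{\mathbf{x}}$ (probability measures on $\mathcal{H}$) is absolutely continuous if each $Q_{\mathbf{x}}$ and $\pi$ are mutually absolutely continuous. A measurable $H:\mathcal{H}\times\mathcal{X}^n\to\mathbb{R}$ is a Hamiltonian for $Q$ if $dQ_{\mathbf{x}}(h)=e^{H(h,\mathbf{x})}d\pi(h)/Z(\mathbf{x})$ with $Z(\mathbf{x})=\int_{\mathcal{H}}e^{H(h,\mathbf{x})}d\pi(h)$. Generalization gap: $\Delta(h,\mathbf{x})=\mathbb{E}[h(X)]-\frac1n\sum_{i=1}^n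 h(x_i)$. $S^k_y\mathbf{x}$ replaces the $k$-th coordinate of $\mathbf{x}$ by $y$; $D^k_{y,y'}G(h,\mathbf{x})=G(h,S^k_y\mathbf{x})-G(h,S^k_{y'}\mathbf{x})$. Probability "in $\mathbf{X}\sim\mu^n$ and $h\sim Q_{\mathbf{X}}$" is w.r.t. the joint law. All functions are assumed to have finite exponential moments of all orders. *)

theory Defs
  imports "HOL-Probability.Probability"
begin

text \<open>Samples \<open>x \<in> X^n\<close> are functions \<open>nat \<Rightarrow> 'x\<close> in \<open>PiE {..<n}\<close>;
  hypotheses are functions \<open>'x \<Rightarrow> real\<close>, forming the measurable space of the
  a-priori measure \<open>Pr\<close>.\<close>

definition sample_space :: "'x measure \<Rightarrow> nat \<Rightarrow> (nat \<Rightarrow> 'x) measure" where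
  "sample_space M n = PiM {..<n} (\<lambda>_. M)"

definition Zfun :: "('x \<Rightarrow> real) measure \<Rightarrow> (('x \<Rightarrow> real) \<Rightarrow> (nat \<Rightarrow> 'x) \<Rightarrow> real)
                     \<Rightarrow> (nat \<Rightarrow> 'x) \<Rightarrow> ennreal" where
  "Zfun Pr H x = (\<integral>\<^sup>+ h. ennreal (exp (H h x)) \<partial>Pr)"

definition stochastic_algorithm ::
  "('x \<Rightarrow> real) measure \<Rightarrow> (nat \<Rightarrow> 'x) measure \<Rightarrow> ((nat \<Rightarrow> 'x) \<Rightarrow> ('x \<Rightarrow> real) measure) \<Rightarrow> bool" where
  "stochastic_algorithm Pr XS Q \<longleftrightarrow>
     (\<forall>x\<in>space XS. prob_space (Q x) \<and> sets (Q x) = sets Pr)"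

definition abs_cont_algorithm ::
  "('x \<Rightarrow> real) measure \<Rightarrow> (nat \<Rightarrow> 'x) measure \<Rightarrow> ((nat \<Rightarrow> 'x) \<Rightarrow> ('x \<Rightarrow> real) measure) \<Rightarrow> bool" where
  "abs_cont_algorithm Pr XS Q \<longleftrightarrow> stochastic_algorithm Pr XS Q \<and>
     (\<forall>x\<in>space XS. absolutely_continuous Pr (Q x) \<and> absolutely_continuous (Q x) Pr)"

definition is_hamiltonian ::
  "('x \<Rightarrow> real) measure \<Rightarrow> (nat \<Rightarrow> 'x) measure \<Rightarrow> ((nat \<Rightarrow> 'x) \<Rightarrow> ('x \<Rightarrow> real) measure)
     \<Rightarrow> (('x \<Rightarrow> real) \<Rightarrow> (nat \<Rightarrow> 'x) \<Rightarrow> real) \<Rightarrow> bool" where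
  "is_hamiltonian Pr XS Q H \<longleftrightarrow>
     (\<lambda>(h, x). H h x) \<in> borel_measurable (Pr \<Otimes>\<^sub>M XS) \<and>
     (\<forall>x\<in>space XS. Q x = density Pr (\<lambda>h. ennreal (exp (H h x)) / Zfun Pr H x))"

definition gen_gap :: "'x measure \<Rightarrow> nat \<Rightarrow> ('x \<Rightarrow> real) \<Rightarrow> (nat \<Rightarrow> 'x) \<Rightarrow> real" where
  "gen_gap M n h x = (\<integral>z. h z \<partial>M) - (\<Sum>i<n. h (x i)) / real n"

definition hvar :: "'x measure \<Rightarrow> ('x \<Rightarrow> real) \<Rightarrow> real" where
  "hvar M h = (\<integral>z. (h z - (\<integral>z'. h z' \<partial>M))\<^sup>2 \<partial>M)"

end

theory Submission
  imports Defs
begin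


lemma exp_neg_quad:
  fixes u :: real assumes "u \<le> 0" shows "exp u \<le> 1 + u + u\<^sup>2 / 2"
proof -
  let ?f = "\<lambda>t::real. 1 + t + t\<^sup>2 / 2 - exp t"
  have "?f 0 \<le> ?f u"
  proof (rule DERIV_nonpos_imp_nonincreasing[OF assms])
    fix x :: real assume "u \<le> x" "x \<le> 0"
    show "\<exists>y. (?f has_real_derivative y) (at x) \<and> y \<le> 0"
      apply (rule exI[of _ "1 + x - exp x"])
      using exp_ge_add_one_self[of x] by (auto intro!: derivative_eq_intros)
  qed
  then show ?thesis by simp
qed

lemma exp_chi:
  fixes u :: real assumes "0 \<le> u" shows "(2 - u) * exp u \<le> 2 + u"
proof -
  let ?f = "\<lambda>t::real. (2 + t) - (2 - t) * exp t"
  have "?f 0 \<le> ?f u"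
  proof (rule DERIV_nonneg_imp_nondecreasing[OF assms])
    fix x :: real assume "0 \<le> x" "x \<le> u"
    have "(1 - x) * exp x \<le> 1"
    proof -
      have "1 - x \<le> exp (-x)" using exp_ge_add_one_self[of "-x"] by simp
      hence "(1 - x) * exp x \<le> exp (-x) * exp x" by (intro mult_right_mono) auto
      thus ?thesis by (simp add: exp_minus)
    qed
    show "\<exists>y. (?f has_real_derivative y) (at x) \<and> 0 \<le> y"
      apply (rule exI[of _ "1 - (1 - x) * exp x"])
      apply (intro conjI)
       apply (rule derivative_eq_intros refl | simp)+
      using \<open>(1 - x) * exp x \<le> 1\<close> by (auto simp: algebra_simps)
  qed
  then show ?thesis by simp
qed

lemma exp_psi:
  fixes u :: real assumes "0 \<le> u" shows "(6 - 2 * u) * exp u \<le> 6 + 4 * u + u\<^sup>2"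
proof -
  let ?f = "\<lambda>t::real. (6 + 4 * t + t\<^sup>2) - (6 - 2 * t) * exp t"
  have "?f 0 \<le> ?f u"
  proof (rule DERIV_nonneg_imp_nondecreasing[OF assms])
    fix x :: real assume "0 \<le> x" "x \<le> u"
    have "(2 - x) * exp x \<le> 2 + x" using exp_chi \<open>0 \<le> x\<close> by blast
    show "\<exists>y. (?f has_real_derivative y) (at x) \<and> 0 \<le> y"
      apply (rule exI[of _ "4 + 2 * x - (4 - 2 * x) * exp x"])
      apply (intro conjI)
       apply (rule derivative_eq_intros refl | simp)+
       apply (simp add: algebra_simps power2_eq_square)
      using \<open>(2 - x) * exp x \<le> 2 + x\<close> by (auto simp: algebra_simps)
  qed
  then show ?thesis by simp
qed

lemma exp_bernstein:
  fixes u c :: real assumes "0 \<le> c" "c < 3" "u \<le> c"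
  shows "exp u \<le> 1 + u + u\<^sup>2 * (3 / (2 * (3 - c)))"
proof (cases "u \<le> 0")
  case True
  have "u\<^sup>2 / 2 \<le> u\<^sup>2 * (3 / (2 * (3 - c)))"
    using assms by (auto simp: field_simps intro!: mult_left_mono)
  with exp_neg_quad[OF True] show ?thesis by linarith
next
  case False
  hence u: "0 \<le> u" "u < 3" using assms by auto
  have "(6 - 2 * u) * exp u \<le> 6 + 4 * u + u\<^sup>2" using exp_psi u by blast
  hence "exp u \<le> (6 + 4 * u + u\<^sup>2) / (6 - 2 * u)" using u by (simp add: field_simps)
  also have "\<dots> = 1 + u + u\<^sup>2 * (3 / (2 * (3 - u)))" using u
    by (simp add: field_simps power2_eq_square)
  also have "\<dots> \<le> 1 + u + u\<^sup>2 * (3 / (2 * (3 - c)))" using u assms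
    by (auto intro!: mult_left_mono divide_left_mono mult_pos_pos)
  finally show ?thesis .
qed


lemma prob_integral_abs_le:
  fixes g :: "'a \<Rightarrow> real"
  assumes "prob_space M" "integrable M g" "\<And>y. y \<in> space M \<Longrightarrow> \<bar>g y\<bar> \<le> B"
  shows "\<bar>\<integral>y. g y \<partial>M\<bar> \<le> B"
proof -
  interpret prob_space M by fact
  have "\<bar>\<integral>y. g y \<partial>M\<bar> \<le> (\<integral>y. \<bar>g y\<bar> \<partial>M)"
    using integral_norm_bound[of M g] by simp
  also have "\<dots> \<le> (\<integral>y. B \<partial>M)"
    by (rule integral_mono) (use assms in auto)
  also have "\<dots> = B" using prob_space.prob_space[OF assms(1)] by simp
  finally show ?thesis .
qed

lemma bounded_integrable:
  fixes g :: "'a \<Rightarrow> real"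
  assumes "prob_space M" "g \<in> borel_measurable M" "\<And>y. y \<in> space M \<Longrightarrow> \<bar>g y\<bar> \<le> B"
  shows "integrable M g"
proof -
  interpret prob_space M by fact
  show ?thesis
    by (rule integrable_const_bound[where B=B]) (use assms in auto)
qed

lemma mcdiarmid:
  fixes M :: "'a measure"
  assumes M: "prob_space M" and l: "0 < l"
  shows "f \<in> borel_measurable (PiM {..<n} (\<lambda>_. M)) \<Longrightarrow>
    (\<And>x. x \<in> space (PiM {..<n} (\<lambda>_. M)) \<Longrightarrow> \<bar>f x\<bar> \<le> B) \<Longrightarrow>
    (\<And>k x y y'. k < n \<Longrightarrow> x \<in> space (PiM {..<n} (\<lambda>_. M)) \<Longrightarrow> y \<in> space M \<Longrightarrow> y' \<in> space M \<Longrightarrow>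
        f (x(k := y)) - f (x(k := y')) \<le> w) \<Longrightarrow>
    (\<integral>\<^sup>+x. ennreal (exp (l * (f x - (\<integral>x. f x \<partial>PiM {..<n} (\<lambda>_. M))))) \<partial>PiM {..<n} (\<lambda>_. M))
      \<le> ennreal (exp (l\<^sup>2 * real n * w\<^sup>2 / 8))"
proof (induction n arbitrary: f B)
  case 0
  show ?case by (simp add: PiM_empty nn_integral_count_space_finite lebesgue_integral_count_space_finite)
next
  case (Suc n)
  interpret P: product_prob_space "\<lambda>_::nat. M" UNIV
    by (simp add: product_prob_space_def product_sigma_finite_def product_prob_space_axioms_def
        M prob_space_imp_sigma_finite)
  interpret Mp: prob_space M by fact
  let ?N = "PiM {..<n} (\<lambda>_. M)"
  let ?N' = "PiM {..<Suc n} (\<lambda>_. M)"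
  have I: "{..<Suc n} = insert n {..<n}" by auto
  have eqN': "?N' = PiM (insert n {..<n}) (\<lambda>_. M)" by (simp only: I)
  have fm: "f \<in> borel_measurable (PiM (insert n {..<n}) (\<lambda>_. M))"
    using Suc.prems(1) by (simp only: I)
  have spN': "x(n := y) \<in> space ?N'" if "x \<in> space ?N" "y \<in> space M" for x y
    using that by (auto simp: space_PiM I intro!: PiE_fun_upd)
  have spN: "x(k := y) \<in> space ?N" if "x \<in> space ?N" "y \<in> space M" "k < n" for x y k
  proof -
    have "x(k := y) \<in> PiE (insert k {..<n}) (\<lambda>_. space M)"
      using that by (intro PiE_fun_upd) (auto simp: space_PiM)
    thus ?thesis using that by (simp add: space_PiM insert_absorb)
  qed
  have meas2: "(\<lambda>(x, y). f (x(n := y))) \<in> borel_measurable (?N \<Otimes>\<^sub>M M)"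
    using measurable_compose[OF measurable_add_dim[of n "{..<n}" "\<lambda>_. M"] fm]
    by (simp add: split_beta')
  define f1 where "f1 x = (\<integral>y. f (x(n := y)) \<partial>M)" for x
  have f1m: "f1 \<in> borel_measurable ?N"
    unfolding f1_def
    by (rule sigma_finite_measure.borel_measurable_lebesgue_integral[OF prob_space_imp_sigma_finite[OF M] meas2])
  have gm: "(\<lambda>y. f (x(n := y))) \<in> borel_measurable M" if "x \<in> space ?N" for x
    using measurable_compose[OF measurable_component_update[OF that, of n] fm] by simp
  have gint: "integrable M (\<lambda>y. f (x(n := y)))" if "x \<in> space ?N" for x
    by (rule bounded_integrable[OF M gm[OF that], of B]) (use Suc.prems(2) spN' that in auto)
  have f1b: "\<bar>f1 x\<bar> \<le> B" if "x \<in> space ?N" for x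
    unfolding f1_def
    by (rule prob_integral_abs_le[OF M gint[OF that]]) (use Suc.prems(2) spN' that in auto)
  have f1d: "f1 (x(k := y)) - f1 (x(k := y')) \<le> w"
    if "k < n" "x \<in> space ?N" "y \<in> space M" "y' \<in> space M" for k x y y'
  proof -
    have "f1 (x(k := y)) - f1 (x(k := y')) = (\<integral>z. f (x(k := y, n := z)) - f (x(k := y', n := z)) \<partial>M)"
      unfolding f1_def
      by (subst Bochner_Integration.integral_diff) (use gint spN that in auto)
    also have "\<dots> \<le> (\<integral>z. w \<partial>M)"
    proof (rule integral_mono)
      show "integrable M (\<lambda>z. f (x(k := y, n := z)) - f (x(k := y', n := z)))"
        using gint spN that by auto
      fix z assume z: "z \<in> space M"
      have e: "x(k := y, n := z) = (x(n := z))(k := y)" "x(k := y', n := z) = (x(n := z))(k := y')"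
        using that by (auto simp: fun_upd_twist)
      have "f ((x(n := z))(k := y)) - f ((x(n := z))(k := y')) \<le> w"
        by (rule Suc.prems(3)[OF _ spN'[OF that(2) z] that(3) that(4)]) (use that in simp)
      thus "f (x(k := y, n := z)) - f (x(k := y', n := z)) \<le> w"
        by (simp only: e)
    qed simp
    also have "\<dots> = w" using prob_space.prob_space[OF M] by simp
    finally show ?thesis .
  qed
  have fint: "integrable ?N' f"
    by (rule bounded_integrable[OF prob_space_PiM[OF M] Suc.prems(1), of B]) (use Suc.prems(2) in auto)
  have Eeq: "(\<integral>x. f x \<partial>?N') = (\<integral>x. f1 x \<partial>?N)"
    unfolding f1_def eqN'
    by (rule P.product_integral_insert) (use fint eqN' in auto)
  define E where "E = (\<integral>x. f1 x \<partial>?N)"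
  define C where "C = exp (l\<^sup>2 * w\<^sup>2 / 8)"
  have IH: "(\<integral>\<^sup>+x. ennreal (exp (l * (f1 x - E))) \<partial>?N) \<le> ennreal (exp (l\<^sup>2 * real n * w\<^sup>2 / 8))"
    unfolding E_def by (rule Suc.IH[OF f1m f1b f1d]) auto
  have inner: "(\<integral>\<^sup>+y. ennreal (exp (l * (f (x(n := y)) - E))) \<partial>M) \<le> ennreal (exp (l * (f1 x - E))) * C"
    if x: "x \<in> space ?N" for x
  proof -
    let ?g = "\<lambda>y. f (x(n := y))"
    define V where "V = ?g ` space M"
    have Vne: "V \<noteq> {}" using prob_space.not_empty[OF M] by (simp add: V_def)
    have Vbdd: "bdd_below V"
    proof -
      have "-B \<le> ?g y" if y: "y \<in> space M" for y
      proof -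
        have "\<bar>?g y\<bar> \<le> B" by (rule Suc.prems(2)[OF spN'[OF x y]])
        thus ?thesis by arith
      qed
      thus ?thesis unfolding V_def bdd_below_def by blast
    qed
    define a where "a = Inf V"
    have rng: "?g y \<in> {a..a + w}" if y: "y \<in> space M" for y
    proof -
      have l1: "a \<le> ?g y" unfolding a_def using y Vbdd by (auto simp: V_def intro!: cInf_lower)
      have "?g y - w \<le> a" unfolding a_def
      proof (rule cInf_greatest[OF Vne])
        fix v assume "v \<in> V"
        then obtain y' where y': "y' \<in> space M" "v = ?g y'" by (auto simp: V_def)
        have "f ((x(n := y))(n := y)) - f ((x(n := y))(n := y')) \<le> w"
          by (rule Suc.prems(3)[OF _ spN'[OF x y] y y'(1)]) simp
        thus "?g y - w \<le> v" using y' by simp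
      qed
      thus ?thesis using l1 by simp
    qed
    interpret G: interval_bounded_random_variable M ?g a "a + w"
      by unfold_locales (use gm[OF x] rng in auto)
    have hoeff: "(\<integral>\<^sup>+y. ennreal (exp (l * (?g y - f1 x))) \<partial>M) \<le> ennreal C"
      using G.Hoeffdings_lemma_nn_integral[OF l] by (simp add: C_def f1_def)
    have "(\<integral>\<^sup>+y. ennreal (exp (l * (?g y - E))) \<partial>M) =
          (\<integral>\<^sup>+y. ennreal (exp (l * (f1 x - E))) * ennreal (exp (l * (?g y - f1 x))) \<partial>M)"
      by (intro nn_integral_cong) (simp add: ennreal_mult[symmetric] exp_add[symmetric] algebra_simps)
    also have "\<dots> = ennreal (exp (l * (f1 x - E))) * (\<integral>\<^sup>+y. ennreal (exp (l * (?g y - f1 x))) \<partial>M)"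
      by (rule nn_integral_cmult) (use gm[OF x] in measurable)
    also have "\<dots> \<le> ennreal (exp (l * (f1 x - E))) * C"
      by (intro mult_left_mono hoeff) auto
    finally show ?thesis .
  qed
  have "(\<integral>\<^sup>+x. ennreal (exp (l * (f x - (\<integral>x. f x \<partial>?N')))) \<partial>?N') =
        (\<integral>\<^sup>+x. ennreal (exp (l * (f x - E))) \<partial>PiM (insert n {..<n}) (\<lambda>_. M))"
    using Eeq E_def eqN' by simp
  also have "\<dots> = (\<integral>\<^sup>+x. (\<integral>\<^sup>+y. ennreal (exp (l * (f (x(n := y)) - E))) \<partial>M) \<partial>?N)"
    by (rule P.product_nn_integral_insert) (use fm in auto)
  also have "\<dots> \<le> (\<integral>\<^sup>+x. ennreal (exp (l * (f1 x - E))) * C \<partial>?N)"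
    by (intro nn_integral_mono inner)
  also have "\<dots> = (\<integral>\<^sup>+x. ennreal (exp (l * (f1 x - E))) \<partial>?N) * C"
    by (rule nn_integral_multc) (use f1m in measurable)
  also have "\<dots> \<le> ennreal (exp (l\<^sup>2 * real n * w\<^sup>2 / 8)) * C"
    by (intro mult_right_mono IH) auto
  also have "\<dots> = ennreal (exp (l\<^sup>2 * real (Suc n) * w\<^sup>2 / 8))"
    by (simp add: C_def ennreal_mult[symmetric] exp_add[symmetric] algebra_simps add_divide_distrib)
  finally show ?case .
qed


lemma bdd_diff_bounded:
  fixes f :: "(nat \<Rightarrow> 'a) \<Rightarrow> real"
  assumes d: "\<And>k x y y'. k < n \<Longrightarrow> x \<in> space (PiM {..<n} (\<lambda>_. M)) \<Longrightarrow> y \<in> space M \<Longrightarrow> y' \<in> space M \<Longrightarrow>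
        f (x(k := y)) - f (x(k := y')) \<le> w"
    and x0: "x0 \<in> space (PiM {..<n} (\<lambda>_. M))" and x: "x \<in> space (PiM {..<n} (\<lambda>_. M))"
  shows "\<bar>f x - f x0\<bar> \<le> real n * w"
proof -
  define mix where "mix j = (\<lambda>i. if i < j then x i else x0 i)" for j
  have sp: "mix j \<in> space (PiM {..<n} (\<lambda>_. M))" for j
    using x x0 by (auto simp: mix_def space_PiM PiE_iff extensional_def)
  have "j \<le> n \<Longrightarrow> \<bar>f (mix j) - f x0\<bar> \<le> real j * w" for j
  proof (induction j)
    case 0
    have "mix 0 = x0" by (simp add: mix_def)
    thus ?case by simp
  next
    case (Suc j)
    have j: "j < n" using Suc.prems by simp
    have xj: "x j \<in> space M" "x0 j \<in> space M" using x x0 j by (auto simp: space_PiM PiE_iff)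
    have e1: "mix (Suc j) = (mix j)(j := x j)" by (auto simp: mix_def)
    have e2: "mix j = (mix j)(j := x0 j)" by (auto simp: mix_def)
    have a1: "f ((mix j)(j := x j)) - f ((mix j)(j := x0 j)) \<le> w"
      by (rule d[OF j sp xj])
    have a2: "f ((mix j)(j := x0 j)) - f ((mix j)(j := x j)) \<le> w"
      by (rule d[OF j sp xj(2) xj(1)])
    have "\<bar>f (mix (Suc j)) - f (mix j)\<bar> \<le> w"
      using a1 a2 e1 e2 by (metis abs_le_iff minus_diff_eq)
    moreover have IH': "\<bar>f (mix j) - f x0\<bar> \<le> real j * w" using Suc.IH Suc.prems by simp
    moreover have "real (Suc j) * w = w + real j * w" by (simp add: algebra_simps)
    ultimately show ?case by arith
  qed
  moreover have "mix n = x"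
  proof (rule ext)
    fix i show "mix n i = x i"
      using x x0 by (cases "i < n") (auto simp: mix_def space_PiM PiE_iff extensional_def)
  qed
  ultimately show ?thesis by (metis order_refl)
qed

lemma exp_integral_le:
  fixes G :: "'a \<Rightarrow> real"
  assumes "prob_space N" "G \<in> borel_measurable N" "\<And>x. x \<in> space N \<Longrightarrow> \<bar>G x\<bar> \<le> B"
  shows "ennreal (exp (\<integral>x. G x \<partial>N)) \<le> (\<integral>\<^sup>+x. ennreal (exp (G x)) \<partial>N)"
proof -
  interpret prob_space N by fact
  define a where "a = (\<integral>x. G x \<partial>N)"
  have Gi: "integrable N G" by (rule bounded_integrable[OF assms])
  have eGi: "integrable N (\<lambda>x. exp (G x))"
  proof (rule bounded_integrable[OF assms(1), of _ "exp B"])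
    show "(\<lambda>x. exp (G x)) \<in> borel_measurable N" using assms(2) by measurable
    fix x assume "x \<in> space N"
    hence "G x \<le> B" using assms(3)[of x] by arith
    thus "\<bar>exp (G x)\<bar> \<le> exp B" by simp
  qed
  have "exp a = (\<integral>x. exp a * (1 + G x - a) \<partial>N)"
    using Gi by (simp add: prob_space a_def algebra_simps)
  also have "\<dots> \<le> (\<integral>x. exp (G x) \<partial>N)"
  proof (rule integral_mono)
    show "integrable N (\<lambda>x. exp a * (1 + G x - a))" using Gi by auto
    show "integrable N (\<lambda>x. exp (G x))" by fact
    fix x
    have "1 + (G x - a) \<le> exp (G x - a)" by (rule exp_ge_add_one_self)
    hence "exp a * (1 + (G x - a)) \<le> exp a * exp (G x - a)" by (intro mult_left_mono) auto
    thus "exp a * (1 + G x - a) \<le> exp (G x)" by (simp add: exp_diff algebra_simps)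
  qed
  also have "ennreal \<dots> = (\<integral>\<^sup>+x. ennreal (exp (G x)) \<partial>N)"
    by (rule nn_integral_eq_integral[symmetric]) (use eGi in auto)
  finally show ?thesis by (simp add: a_def ennreal_leI)
qed

lemma bern_single:
  fixes h :: "'a \<Rightarrow> real"
  assumes M: "prob_space M" and hm: "h \<in> borel_measurable M"
    and hb: "\<And>y. y \<in> space M \<Longrightarrow> 0 \<le> h y \<and> h y \<le> b"
    and lam: "0 \<le> lam" "lam * b < 3"
  shows "(\<integral>\<^sup>+y. ennreal (exp (lam * ((\<integral>z. h z \<partial>M) - h y) - 3 / (2 * (3 - lam * b)) * lam\<^sup>2 * hvar M h)) \<partial>M) \<le> 1"
proof -
  interpret prob_space M by fact
  define m where "m = (\<integral>z. h z \<partial>M)"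
  define v where "v = hvar M h"
  define \<kappa> where "\<kappa> = 3 / (2 * (3 - lam * b))"
  have hi: "integrable M h" by (rule bounded_integrable[OF M hm, of b]) (use hb in auto)
  have b0: "0 \<le> b" using hb not_empty by fastforce
  have mb: "m \<le> b"
  proof -
    have "m \<le> (\<integral>z. b \<partial>M)" unfolding m_def by (rule integral_mono) (use hi hb in auto)
    thus ?thesis by (simp add: prob_space)
  qed
  have sqi: "integrable M (\<lambda>y. (h y - m)\<^sup>2)"
  proof (rule bounded_integrable[OF M, of _ "(\<bar>b\<bar> + \<bar>m\<bar>)\<^sup>2"])
    show "(\<lambda>y. (h y - m)\<^sup>2) \<in> borel_measurable M" using hm by measurable
    fix y assume y: "y \<in> space M"
    have "\<bar>h y - m\<bar> \<le> \<bar>b\<bar> + \<bar>m\<bar>" using hb[OF y] by arith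
    hence "\<bar>h y - m\<bar>\<^sup>2 \<le> (\<bar>b\<bar> + \<bar>m\<bar>)\<^sup>2" by (intro power_mono) auto
    thus "\<bar>(h y - m)\<^sup>2\<bar> \<le> (\<bar>b\<bar> + \<bar>m\<bar>)\<^sup>2" by simp
  qed
  have ei: "integrable M (\<lambda>y. exp (lam * (m - h y)))"
  proof (rule bounded_integrable[OF M, of _ "exp (lam * (\<bar>m\<bar> + \<bar>b\<bar>))"])
    show "(\<lambda>y. exp (lam * (m - h y))) \<in> borel_measurable M" using hm by measurable
    fix y assume y: "y \<in> space M"
    have "m - h y \<le> \<bar>m\<bar> + \<bar>b\<bar>" using hb[OF y] by arith
    hence "lam * (m - h y) \<le> lam * (\<bar>m\<bar> + \<bar>b\<bar>)" using lam by (intro mult_left_mono) auto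
    thus "\<bar>exp (lam * (m - h y))\<bar> \<le> exp (lam * (\<bar>m\<bar> + \<bar>b\<bar>))" by simp
  qed
  have "(\<integral>y. exp (lam * (m - h y)) \<partial>M) \<le> (\<integral>y. 1 + lam * (m - h y) + (lam * (m - h y))\<^sup>2 * \<kappa> \<partial>M)"
  proof (rule integral_mono)
    show "integrable M (\<lambda>y. 1 + lam * (m - h y) + (lam * (m - h y))\<^sup>2 * \<kappa>)"
    proof -
      have "integrable M (\<lambda>y. (lam * (m - h y))\<^sup>2 * \<kappa>)"
        using sqi by (simp add: power_mult_distrib power2_commute)
      thus ?thesis using hi by auto
    qed
    fix y assume y: "y \<in> space M"
    show "exp (lam * (m - h y)) \<le> 1 + lam * (m - h y) + (lam * (m - h y))\<^sup>2 * \<kappa>"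
      unfolding \<kappa>_def
    proof (rule exp_bernstein)
      show "0 \<le> lam * b" using lam b0 by simp
      show "lam * b < 3" by fact
      have "m - h y \<le> b" using hb[OF y] mb by simp
      thus "lam * (m - h y) \<le> lam * b" using lam by (intro mult_left_mono) auto
    qed
  qed (use ei in auto)
  also have "\<dots> = 1 + \<kappa> * lam\<^sup>2 * v"
  proof -
    have "(\<integral>y. 1 + lam * (m - h y) + (lam * (m - h y))\<^sup>2 * \<kappa> \<partial>M) =
          (\<integral>y. 1 + lam * (m - h y) \<partial>M) + (\<integral>y. (lam\<^sup>2 * \<kappa>) * (h y - m)\<^sup>2 \<partial>M)"
    proof -
      have eqi: "(\<lambda>y. 1 + lam * (m - h y) + (lam * (m - h y))\<^sup>2 * \<kappa>) =
                 (\<lambda>y. (1 + lam * (m - h y)) + (lam\<^sup>2 * \<kappa>) * (h y - m)\<^sup>2)"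
        by (rule ext) (simp add: power2_eq_square algebra_simps)
      show ?thesis unfolding eqi
        by (rule Bochner_Integration.integral_add) (use hi sqi in auto)
    qed
    also have "(\<integral>y. 1 + lam * (m - h y) \<partial>M) = 1"
      using hi by (simp add: prob_space m_def)
    also have "(\<integral>y. (lam\<^sup>2 * \<kappa>) * (h y - m)\<^sup>2 \<partial>M) = lam\<^sup>2 * \<kappa> * v"
      by (simp add: v_def hvar_def m_def)
    finally show ?thesis by simp
  qed
  also have "\<dots> \<le> exp (\<kappa> * lam\<^sup>2 * v)"
    using exp_ge_add_one_self by simp
  finally have main: "(\<integral>y. exp (lam * (m - h y)) \<partial>M) \<le> exp (\<kappa> * lam\<^sup>2 * v)" .
  have e1: "(\<integral>\<^sup>+y. ennreal (exp (lam * (m - h y) - \<kappa> * lam\<^sup>2 * v)) \<partial>M) =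
        ennreal (\<integral>y. exp (lam * (m - h y) - \<kappa> * lam\<^sup>2 * v) \<partial>M)"
    by (rule nn_integral_eq_integral) (use ei in \<open>auto simp: exp_diff\<close>)
  have e2: "(\<integral>y. exp (lam * (m - h y) - \<kappa> * lam\<^sup>2 * v) \<partial>M) =
             (\<integral>y. exp (lam * (m - h y)) \<partial>M) / exp (\<kappa> * lam\<^sup>2 * v)"
    by (simp add: exp_diff)
  have "(\<integral>y. exp (lam * (m - h y) - \<kappa> * lam\<^sup>2 * v) \<partial>M) \<le> 1" using main e2 by simp
  hence final: "(\<integral>\<^sup>+y. ennreal (exp (lam * (m - h y) - \<kappa> * lam\<^sup>2 * v)) \<partial>M) \<le> 1"
    unfolding e1 using ennreal_leI by fastforce
  show ?thesis using final by (simp only: m_def v_def \<kappa>_def)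
qed

lemma bern_prod:
  fixes h :: "'a \<Rightarrow> real"
  assumes M: "prob_space M" and n: "0 < n" and hm: "h \<in> borel_measurable M"
    and hb: "\<And>y. y \<in> space M \<Longrightarrow> 0 \<le> h y \<and> h y \<le> b"
    and lam: "0 \<le> lam" "lam * b < 3"
  shows "(\<integral>\<^sup>+x. ennreal (exp (real n * (lam * gen_gap M n h x - 3 / (2 * (3 - lam * b)) * lam\<^sup>2 * hvar M h)))
           \<partial>PiM {..<n} (\<lambda>_. M)) \<le> 1"
proof -
  interpret P: product_prob_space "\<lambda>_::nat. M" UNIV
    by (simp add: product_prob_space_def product_sigma_finite_def product_prob_space_axioms_def
        M prob_space_imp_sigma_finite)
  define m where "m = (\<integral>z. h z \<partial>M)"
  define K where "K = 3 / (2 * (3 - lam * b)) * lam\<^sup>2 * hvar M h"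
  define e where "e y = exp (lam * (m - h y) - K)" for y
  have eq: "real n * (lam * gen_gap M n h x - K) = (\<Sum>i<n. lam * (m - h (x i)) - K)" for x
  proof -
    have "(\<Sum>i<n. lam * (m - h (x i)) - K) = real n * (lam * m) - lam * (\<Sum>i<n. h (x i)) - real n * K"
      by (simp add: sum_subtractf right_diff_distrib sum_distrib_left)
    also have "\<dots> = real n * (lam * gen_gap M n h x - K)"
      using n by (simp add: gen_gap_def m_def field_simps)
    finally show ?thesis by simp
  qed
  have "(\<integral>\<^sup>+x. ennreal (exp (real n * (lam * gen_gap M n h x - K))) \<partial>PiM {..<n} (\<lambda>_. M)) =
        (\<integral>\<^sup>+x. (\<Prod>i\<in>{..<n}. ennreal (e (x i))) \<partial>PiM {..<n} (\<lambda>_. M))"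
    by (intro nn_integral_cong) (simp add: eq e_def exp_sum prod_ennreal)
  also have "\<dots> = (\<Prod>i\<in>{..<n}. (\<integral>\<^sup>+y. ennreal (e y) \<partial>M))"
    by (rule P.product_nn_integral_prod) (use hm in \<open>auto simp: e_def\<close>)
  also have "\<dots> \<le> 1"
  proof (rule prod_le_1)
    fix i show "0 \<le> (\<integral>\<^sup>+y. ennreal (e y) \<partial>M) \<and> (\<integral>\<^sup>+y. ennreal (e y) \<partial>M) \<le> 1"
      using bern_single[OF M hm hb lam] by (simp add: e_def m_def K_def)
  qed
  finally show ?thesis by (simp add: K_def)
qed


lemma choice:
  fixes A b v d :: real
  assumes A: "0 < A" and b: "0 < b" and v: "0 \<le> v"
  defines "s \<equiv> sqrt (v * A)"
  defines "lam \<equiv> 2 * A / (s + b * A)"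
  shows "0 < lam" "lam * b \<le> 2"
    "d > 2 * s + b * A \<Longrightarrow> lam * d - 3 / (2 * (3 - lam * b)) * lam\<^sup>2 * v > 2 * A"
proof -
  have s0: "0 \<le> s" unfolding s_def using v A by simp
  have ss: "s\<^sup>2 = v * A" unfolding s_def using v A by simp
  define D where "D = s + b * A"
  have D: "0 < D" unfolding D_def using s0 b A by (simp add: add_nonneg_pos)
  have lamD: "lam = 2 * A / D" unfolding lam_def D_def ..
  show l0: "0 < lam" unfolding lamD using A D by simp
  show "lam * b \<le> 2"
  proof -
    have "2 * A * b \<le> 2 * D" unfolding D_def using s0 by simp
    thus ?thesis unfolding lamD using D by (simp add: field_simps)
  qed
  have t: "3 - lam * b = (3 * s + b * A) / D"
    unfolding lamD using D by (simp add: field_simps D_def)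
  have q: "3 * s + b * A > 0" using s0 b A by (simp add: add_nonneg_pos)
  have kap: "3 / (2 * (3 - lam * b)) = 3 * D / (2 * (3 * s + b * A))"
    unfolding t using D q by (simp add: field_simps)
  have kl0: "3 / (2 * (3 - lam * b)) * lam = 3 / (2 * ((3 * s + b * A) / D)) * (2 * A / D)"
    apply (subst t)
    apply (subst lamD)
    apply (rule refl)
    done
  have kl1: "3 / (2 * (3 - lam * b)) * lam = 3 * A / (3 * s + b * A)"
    unfolding kl0 using D q by (simp add: field_simps)
  have kl2: "3 * A * v / (3 * s + b * A) \<le> s"
  proof -
    have "3 * A * v = 3 * s\<^sup>2" using ss by (simp add: algebra_simps)
    also have "\<dots> \<le> s * (3 * s + b * A)" using s0 b A by (simp add: power2_eq_square algebra_simps)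
    finally show ?thesis using q by (simp add: divide_le_eq)
  qed
  have "3 / (2 * (3 - lam * b)) * lam\<^sup>2 * v = lam * ((3 / (2 * (3 - lam * b)) * lam) * v)"
    by (simp add: power2_eq_square algebra_simps)
  also have "\<dots> = lam * (3 * A * v / (3 * s + b * A))" unfolding kl1 by simp
  also have "\<dots> \<le> lam * s" using kl2 l0 by (intro mult_left_mono) auto
  finally have kl: "3 / (2 * (3 - lam * b)) * lam\<^sup>2 * v \<le> lam * s" .
  assume "d > 2 * s + b * A"
  hence "lam * d > lam * (2 * s + b * A)" using l0 by simp
  also have "lam * (2 * s + b * A) = lam * s + 2 * A"
    unfolding lamD using D by (simp add: field_simps D_def)
  finally show "lam * d - 3 / (2 * (3 - lam * b)) * lam\<^sup>2 * v > 2 * A" using kl by simp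
qed

lemma per_h:
  fixes h :: "'a \<Rightarrow> real" and G :: "(nat \<Rightarrow> 'a) \<Rightarrow> real"
  assumes M: "prob_space M" and n: "0 < n" and hm: "h \<in> borel_measurable M"
    and hb: "\<And>y. y \<in> space M \<Longrightarrow> 0 \<le> h y \<and> h y \<le> b"
    and lam: "0 \<le> lam" "lam * b < 3"
    and Gm: "G \<in> borel_measurable (PiM {..<n} (\<lambda>_. M))"
    and Gb: "\<And>x. x \<in> space (PiM {..<n} (\<lambda>_. M)) \<Longrightarrow> \<bar>G x\<bar> \<le> B"
    and Gd: "\<And>k x y y'. k < n \<Longrightarrow> x \<in> space (PiM {..<n} (\<lambda>_. M)) \<Longrightarrow> y \<in> space M \<Longrightarrow> y' \<in> space M \<Longrightarrow>
        G (x(k := y)) - G (x(k := y')) \<le> 2 * c"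
  shows "(\<integral>\<^sup>+x. ennreal (exp (real n * (lam * gen_gap M n h x - 3 / (2 * (3 - lam * b)) * lam\<^sup>2 * hvar M h) / 2
              - real n * c\<^sup>2 + G x)) \<partial>PiM {..<n} (\<lambda>_. M)) \<le> ennreal (exp (\<integral>x. G x \<partial>PiM {..<n} (\<lambda>_. M)))"
proof -
  let ?X = "PiM {..<n} (\<lambda>_. M)"
  define E where "E = (\<integral>x. G x \<partial>?X)"
  define P where "P x = real n * (lam * gen_gap M n h x - 3 / (2 * (3 - lam * b)) * lam\<^sup>2 * hvar M h)" for x
  define C where "C = real n * c\<^sup>2"
  have Pm: "P \<in> borel_measurable ?X"
    unfolding P_def gen_gap_def using hm by measurable
  have bp: "(\<integral>\<^sup>+x. ennreal (exp (P x)) \<partial>?X) \<le> 1"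
    unfolding P_def by (rule bern_prod[OF M n hm hb lam])
  have mc: "(\<integral>\<^sup>+x. ennreal (exp (2 * (G x - E))) \<partial>?X) \<le> ennreal (exp (2 * C))"
  proof -
    have "(\<integral>\<^sup>+x. ennreal (exp (2 * (G x - E))) \<partial>?X) \<le> ennreal (exp (2\<^sup>2 * real n * (2 * c)\<^sup>2 / 8))"
      unfolding E_def by (rule mcdiarmid[OF M _ Gm Gb Gd]) auto
    also have "2\<^sup>2 * real n * (2 * c)\<^sup>2 / 8 = 2 * C" by (simp add: C_def power2_eq_square)
    finally show ?thesis .
  qed
  have pw: "ennreal (exp (P x / 2 - C + G x)) \<le>
      ennreal (exp E / 2) * ennreal (exp (P x)) + ennreal (exp E / 2 * exp (- 2 * C)) * ennreal (exp (2 * (G x - E)))"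
    for x
  proof -
    define a where "a = exp (P x / 2)"
    define bb where "bb = exp (G x - E - C)"
    have "a * bb \<le> (a\<^sup>2 + bb\<^sup>2) / 2"
      using sum_squares_bound[of a bb] by simp
    hence "exp E * (a * bb) \<le> exp E * ((a\<^sup>2 + bb\<^sup>2) / 2)" by (intro mult_left_mono) auto
    moreover have "exp (P x / 2 - C + G x) = exp E * (a * bb)"
      unfolding a_def bb_def by (simp add: exp_add[symmetric] exp_diff[symmetric] algebra_simps)
    moreover have "a\<^sup>2 = exp (P x)"
      unfolding a_def by (simp add: power2_eq_square exp_add[symmetric])
    moreover have "bb\<^sup>2 = exp (- 2 * C) * exp (2 * (G x - E))"
      unfolding bb_def by (simp add: power2_eq_square exp_add[symmetric] algebra_simps)
    ultimately have "exp (P x / 2 - C + G x) \<le> exp E / 2 * exp (P x) + exp E / 2 * exp (- 2 * C) * exp (2 * (G x - E))"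
      by (simp add: algebra_simps add_divide_distrib)
    thus ?thesis
      by (simp add: ennreal_mult[symmetric] ennreal_plus[symmetric] del: ennreal_plus)
  qed
  have "(\<integral>\<^sup>+x. ennreal (exp (P x / 2 - C + G x)) \<partial>?X) \<le>
        (\<integral>\<^sup>+x. ennreal (exp E / 2) * ennreal (exp (P x)) + ennreal (exp E / 2 * exp (- 2 * C)) * ennreal (exp (2 * (G x - E))) \<partial>?X)"
    by (intro nn_integral_mono pw)
  also have "\<dots> = ennreal (exp E / 2) * (\<integral>\<^sup>+x. ennreal (exp (P x)) \<partial>?X) +
                  ennreal (exp E / 2 * exp (- 2 * C)) * (\<integral>\<^sup>+x. ennreal (exp (2 * (G x - E))) \<partial>?X)"
    using Pm Gm by (simp add: nn_integral_add nn_integral_cmult)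
  also have "\<dots> \<le> ennreal (exp E / 2) * 1 + ennreal (exp E / 2 * exp (- 2 * C)) * ennreal (exp (2 * C))"
    by (intro add_mono mult_left_mono bp mc) auto
  also have "\<dots> = ennreal (exp E)"
    by (simp add: ennreal_mult[symmetric] ennreal_plus[symmetric] exp_add[symmetric] del: ennreal_plus)
  finally show ?thesis unfolding P_def C_def E_def by simp
qed


lemma aux_lin: "(x::real) < y \<Longrightarrow> x = 2 * z + 2 * L \<Longrightarrow> L < y / 2 - z"
  by linarith

lemma core:
  fixes M :: "'x measure" and Pr :: "('x \<Rightarrow> real) measure" and n :: nat
    and g :: "('x \<Rightarrow> real) \<Rightarrow> (nat \<Rightarrow> 'x) \<Rightarrow> real"
    and b c \<delta> :: real
  assumes M: "prob_space M" and n: "0 < n"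
    and hyp_meas: "(\<lambda>(h, z). h z) \<in> borel_measurable (Pr \<Otimes>\<^sub>M M)"
    and sfPr: "sigma_finite_measure Pr"
    and gm: "(\<lambda>p. g (fst p) (snd p)) \<in> borel_measurable (Pr \<Otimes>\<^sub>M PiM {..<n} (\<lambda>_. M))"
    and int1: "\<And>x. x \<in> space (PiM {..<n} (\<lambda>_. M)) \<Longrightarrow> (\<integral>\<^sup>+h. ennreal (exp (g h x)) \<partial>Pr) = 1"
    and gd: "\<And>h k x y y'. h \<in> space Pr \<Longrightarrow> k < n \<Longrightarrow> x \<in> space (PiM {..<n} (\<lambda>_. M)) \<Longrightarrow>
               y \<in> space M \<Longrightarrow> y' \<in> space M \<Longrightarrow> g h (x(k := y)) - g h (x(k := y')) \<le> 2 * c"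
    and brange: "\<And>h y. h \<in> space Pr \<Longrightarrow> y \<in> space M \<Longrightarrow> 0 \<le> h y \<and> h y \<le> b"
    and b: "0 < b" and \<delta>: "0 < \<delta>" "\<delta> < 1"
  shows "(\<forall>x\<in>space (PiM {..<n} (\<lambda>_. M)). {h \<in> space Pr. gen_gap M n h x \<le> 2 * sqrt (hvar M h * (c\<^sup>2 + ln (1 / \<delta>) / real n))
                           + b * (c\<^sup>2 + ln (1 / \<delta>) / real n)} \<in> sets Pr) \<and>
    ennreal (1 - \<delta>) \<le> (\<integral>\<^sup>+x. (\<integral>\<^sup>+h. ennreal (exp (g h x)) *
            indicator {h \<in> space Pr. gen_gap M n h x \<le> 2 * sqrt (hvar M h * (c\<^sup>2 + ln (1 / \<delta>) / real n))
                           + b * (c\<^sup>2 + ln (1 / \<delta>) / real n)} h \<partial>Pr) \<partial>PiM {..<n} (\<lambda>_. M))"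
proof -
  let ?X = "PiM {..<n} (\<lambda>_. M)"
  interpret Mp: prob_space M by fact
  have Xp: "prob_space ?X" by (rule prob_space_PiM) (use M in auto)
  interpret Xp: prob_space ?X by fact
  interpret sfPr: sigma_finite_measure Pr by fact
  interpret PX: pair_sigma_finite Pr ?X
    by (intro pair_sigma_finite.intro sfPr Xp.sigma_finite_measure_axioms)
  obtain x0 where x0: "x0 \<in> space ?X" using Xp.not_empty by blast
  define L where "L = ln (1 / \<delta>)"
  define A where "A = c\<^sup>2 + L / real n"
  have L0: "0 < L" unfolding L_def using \<delta> by simp
  have A0: "0 < A" unfolding A_def using L0 n by (simp add: add_nonneg_pos)
  define R where "R h = 2 * sqrt (hvar M h * A) + b * A" for h
  define lam where "lam h = 2 * A / (sqrt (hvar M h * A) + b * A)" for h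
  define F where "F h x = real n * (lam h * gen_gap M n h x - 3 / (2 * (3 - lam h * b)) * (lam h)\<^sup>2 * hvar M h) / 2
              - real n * c\<^sup>2" for h x
  have mh: "(\<lambda>h. \<integral>z. h z \<partial>M) \<in> borel_measurable Pr"
    by (rule sigma_finite_measure.borel_measurable_lebesgue_integral[OF prob_space_imp_sigma_finite[OF M]])
       (use hyp_meas in simp)
  have vm: "(\<lambda>h. hvar M h) \<in> borel_measurable Pr"
    unfolding hvar_def
  proof (rule sigma_finite_measure.borel_measurable_lebesgue_integral[OF prob_space_imp_sigma_finite[OF M]])
    have "(\<lambda>p. (fst p) (snd p)) \<in> borel_measurable (Pr \<Otimes>\<^sub>M M)" using hyp_meas by (simp add: split_beta')
    moreover have "(\<lambda>p. \<integral>z. (fst p) z \<partial>M) \<in> borel_measurable (Pr \<Otimes>\<^sub>M M)"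
      using mh by measurable
    ultimately show "(\<lambda>(h, z). (h z - (\<integral>z'. h z' \<partial>M))\<^sup>2) \<in> borel_measurable (Pr \<Otimes>\<^sub>M M)"
      by (simp add: split_beta')
  qed
  have Rm: "R \<in> borel_measurable Pr" unfolding R_def using vm by measurable
  have lamm: "lam \<in> borel_measurable Pr" unfolding lam_def using vm by measurable
  have gapm: "(\<lambda>p. gen_gap M n (fst p) (snd p)) \<in> borel_measurable (Pr \<Otimes>\<^sub>M ?X)"
  proof -
    have c1: "(\<lambda>p. \<integral>z. (fst p) z \<partial>M) \<in> borel_measurable (Pr \<Otimes>\<^sub>M ?X)"
      using mh by measurable
    have c2: "(\<lambda>p. (fst p) (snd p i)) \<in> borel_measurable (Pr \<Otimes>\<^sub>M ?X)" if i: "i < n" for i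
    proof -
      have "(\<lambda>p. (fst p, snd p i)) \<in> measurable (Pr \<Otimes>\<^sub>M ?X) (Pr \<Otimes>\<^sub>M M)"
        apply measurable using i by simp
      from measurable_compose[OF this hyp_meas] show ?thesis by simp
    qed
    have "(\<lambda>p. \<Sum>i<n. (fst p) (snd p i)) \<in> borel_measurable (Pr \<Otimes>\<^sub>M ?X)"
      using c2 by (intro borel_measurable_sum) auto
    thus ?thesis unfolding gen_gap_def using c1 by measurable
  qed
  have innerm: "(\<lambda>x. \<integral>\<^sup>+h. f h x \<partial>Pr) \<in> borel_measurable ?X"
    if "(\<lambda>p. f (fst p) (snd p)) \<in> borel_measurable (Pr \<Otimes>\<^sub>M ?X)" for f :: "_ \<Rightarrow> _ \<Rightarrow> ennreal"
  proof -
    have "(\<lambda>(x, h). f h x) \<in> borel_measurable (?X \<Otimes>\<^sub>M Pr)"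
      using that measurable_pair_swap_iff[of "\<lambda>p. f (fst p) (snd p)" Pr ?X borel] by (simp add: split_beta')
    thus ?thesis by (rule sfPr.borel_measurable_nn_integral)
  qed
  have slice: "(\<lambda>h. f h x) \<in> borel_measurable Pr"
    if "(\<lambda>p. f (fst p) (snd p)) \<in> borel_measurable (Pr \<Otimes>\<^sub>M ?X)" "x \<in> space ?X" for f :: "_ \<Rightarrow> _ \<Rightarrow> 'b::topological_space" and x
    using measurable_compose[OF measurable_Pair2'[OF that(2)] that(1)] by simp
  have slice2: "(\<lambda>x. f h x) \<in> borel_measurable ?X"
    if "(\<lambda>p. f (fst p) (snd p)) \<in> borel_measurable (Pr \<Otimes>\<^sub>M ?X)" "h \<in> space Pr" for f :: "_ \<Rightarrow> _ \<Rightarrow> 'b::topological_space" and h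
    using measurable_compose[OF measurable_Pair1'[OF that(2)] that(1)] by simp
  define e where "e h x = ennreal (exp (g h x))" for h x
  define gI where "gI h x = (if gen_gap M n h x \<le> R h then 1 else 0 :: ennreal)" for h x
  define bI where "bI h x = (if gen_gap M n h x \<le> R h then 0 else 1 :: ennreal)" for h x
  have em: "(\<lambda>p. e (fst p) (snd p)) \<in> borel_measurable (Pr \<Otimes>\<^sub>M ?X)"
    unfolding e_def using gm by measurable
  have gIm: "(\<lambda>p. e (fst p) (snd p) * gI (fst p) (snd p)) \<in> borel_measurable (Pr \<Otimes>\<^sub>M ?X)"
    unfolding gI_def using em gapm Rm by measurable
  have bIm: "(\<lambda>p. e (fst p) (snd p) * bI (fst p) (snd p)) \<in> borel_measurable (Pr \<Otimes>\<^sub>M ?X)"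
    unfolding bI_def using em gapm Rm by measurable
  define EF where "EF h x = ennreal (exp (F h x + g h x))" for h x
  have EFm: "(\<lambda>p. EF (fst p) (snd p)) \<in> borel_measurable (Pr \<Otimes>\<^sub>M ?X)"
    unfolding EF_def F_def using gm gapm lamm vm by measurable
  have TG_TB: "1 = (\<integral>\<^sup>+x. (\<integral>\<^sup>+h. e h x * gI h x \<partial>Pr) \<partial>?X) + (\<integral>\<^sup>+x. (\<integral>\<^sup>+h. e h x * bI h x \<partial>Pr) \<partial>?X)"
  proof -
    have "1 = (\<integral>\<^sup>+x. 1 \<partial>?X)" using Xp.emeasure_space_1 by simp
    also have "\<dots> = (\<integral>\<^sup>+x. (\<integral>\<^sup>+h. e h x \<partial>Pr) \<partial>?X)"
      by (intro nn_integral_cong) (simp add: int1 e_def)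
    also have "\<dots> = (\<integral>\<^sup>+x. (\<integral>\<^sup>+h. e h x * gI h x \<partial>Pr) + (\<integral>\<^sup>+h. e h x * bI h x \<partial>Pr) \<partial>?X)"
    proof (intro nn_integral_cong)
      fix x assume x: "x \<in> space ?X"
      have "(\<integral>\<^sup>+h. e h x \<partial>Pr) = (\<integral>\<^sup>+h. e h x * gI h x + e h x * bI h x \<partial>Pr)"
        by (intro nn_integral_cong) (simp add: gI_def bI_def)
      also have "\<dots> = (\<integral>\<^sup>+h. e h x * gI h x \<partial>Pr) + (\<integral>\<^sup>+h. e h x * bI h x \<partial>Pr)"
        by (rule nn_integral_add) (use slice[OF gIm x] slice[OF bIm x] in auto)
      finally show "(\<integral>\<^sup>+h. e h x \<partial>Pr) = (\<integral>\<^sup>+h. e h x * gI h x \<partial>Pr) + (\<integral>\<^sup>+h. e h x * bI h x \<partial>Pr)" .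
    qed
    also have "\<dots> = (\<integral>\<^sup>+x. (\<integral>\<^sup>+h. e h x * gI h x \<partial>Pr) \<partial>?X) + (\<integral>\<^sup>+x. (\<integral>\<^sup>+h. e h x * bI h x \<partial>Pr) \<partial>?X)"
      by (rule nn_integral_add) (use innerm[OF gIm] innerm[OF bIm] in auto)
    finally show ?thesis .
  qed
  have hM: "h \<in> borel_measurable M" if "h \<in> space Pr" for h
    using measurable_compose[OF measurable_Pair1'[OF that] hyp_meas] by simp
  have vpos: "0 \<le> hvar M h" for h unfolding hvar_def by (rule Bochner_Integration.integral_nonneg) auto
  have lamp: "0 < lam h" "lam h * b \<le> 2" for h
    using choice(1,2)[OF A0 b vpos] by (simp_all add: lam_def)
  have gbound: "\<bar>g h x\<bar> \<le> \<bar>g h x0\<bar> + real n * (2 * c)" if "h \<in> space Pr" "x \<in> space ?X" for h x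
  proof -
    have "\<bar>g h x - g h x0\<bar> \<le> real n * (2 * c)"
      by (rule bdd_diff_bounded[OF _ x0 that(2)]) (rule gd[OF that(1)])
    thus ?thesis by arith
  qed
  have perh: "(\<integral>\<^sup>+x. EF h x \<partial>?X) \<le> (\<integral>\<^sup>+x. e h x \<partial>?X)" if h: "h \<in> space Pr" for h
  proof -
    have "(\<integral>\<^sup>+x. EF h x \<partial>?X) \<le> ennreal (exp (\<integral>x. g h x \<partial>?X))"
      unfolding EF_def F_def
      by (rule per_h[OF M n hM[OF h] brange[OF h] _ _ slice2[OF gm h] gbound[OF h] gd[OF h]])
         (use lamp[of h] b in auto)
    also have "\<dots> \<le> (\<integral>\<^sup>+x. e h x \<partial>?X)"
      unfolding e_def by (rule exp_integral_le[OF Xp slice2[OF gm h] gbound[OF h]])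
    finally show ?thesis .
  qed
  have bad: "e h x * bI h x \<le> ennreal \<delta> * EF h x" if h: "h \<in> space Pr" for h x
  proof (cases "gen_gap M n h x \<le> R h")
    case True thus ?thesis by (simp add: bI_def)
  next
    case False
    hence "gen_gap M n h x > 2 * sqrt (hvar M h * A) + b * A" by (simp add: R_def)
    from choice(3)[OF A0 b vpos this]
    have Y: "lam h * gen_gap M n h x - 3 / (2 * (3 - lam h * b)) * (lam h)\<^sup>2 * hvar M h > 2 * A"
      by (simp add: lam_def)
    have "real n * A = real n * c\<^sup>2 + L" unfolding A_def using n by (simp add: field_simps)
    hence nA: "real n * A = real n * c\<^sup>2 + L" .
    have "real n * (2 * A) < real n * (lam h * gen_gap M n h x - 3 / (2 * (3 - lam h * b)) * (lam h)\<^sup>2 * hvar M h)"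
      using Y n by (intro mult_strict_left_mono) auto
    moreover have "real n * (2 * A) = 2 * (real n * c\<^sup>2) + 2 * L" using nA by simp
    ultimately have FL: "F h x > L" unfolding F_def
      by (rule aux_lin)
    have "1 = \<delta> * exp L" unfolding L_def using \<delta> by simp
    also have "\<dots> \<le> \<delta> * exp (F h x)" using FL \<delta> by simp
    finally have c1: "1 \<le> \<delta> * exp (F h x)" .
    have "1 * exp (g h x) \<le> (\<delta> * exp (F h x)) * exp (g h x)"
      by (rule mult_right_mono[OF c1]) auto
    hence "exp (g h x) \<le> \<delta> * exp (F h x + g h x)"
      by (simp add: exp_add mult.assoc)
    thus ?thesis using False \<delta> by (simp add: bI_def e_def EF_def ennreal_mult[symmetric])
  qed
  have TB: "(\<integral>\<^sup>+x. (\<integral>\<^sup>+h. e h x * bI h x \<partial>Pr) \<partial>?X) \<le> ennreal \<delta>"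
  proof -
    have mono: "\<And>x y. x \<le> y \<Longrightarrow> ennreal \<delta> * x \<le> ennreal \<delta> * y" by (simp add: mult_left_mono)
    have "(\<integral>\<^sup>+x. (\<integral>\<^sup>+h. e h x * bI h x \<partial>Pr) \<partial>?X) \<le> (\<integral>\<^sup>+x. (\<integral>\<^sup>+h. ennreal \<delta> * EF h x \<partial>Pr) \<partial>?X)"
      by (intro nn_integral_mono bad)
    also have "\<dots> = (\<integral>\<^sup>+x. ennreal \<delta> * (\<integral>\<^sup>+h. EF h x \<partial>Pr) \<partial>?X)"
      by (intro nn_integral_cong nn_integral_cmult slice[OF EFm])
    also have "\<dots> = ennreal \<delta> * (\<integral>\<^sup>+x. (\<integral>\<^sup>+h. EF h x \<partial>Pr) \<partial>?X)"
      by (rule nn_integral_cmult) (rule innerm[OF EFm])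
    also have "(\<integral>\<^sup>+x. (\<integral>\<^sup>+h. EF h x \<partial>Pr) \<partial>?X) = (\<integral>\<^sup>+h. (\<integral>\<^sup>+x. EF h x \<partial>?X) \<partial>Pr)"
      by (rule PX.Fubini') (use EFm in \<open>simp add: split_beta'\<close>)
    also have "\<dots> \<le> (\<integral>\<^sup>+h. (\<integral>\<^sup>+x. e h x \<partial>?X) \<partial>Pr)"
      by (intro nn_integral_mono perh)
    also have "\<dots> = (\<integral>\<^sup>+x. (\<integral>\<^sup>+h. e h x \<partial>Pr) \<partial>?X)"
      by (rule PX.Fubini'[symmetric]) (use em in \<open>simp add: split_beta'\<close>)
    also have "\<dots> = (\<integral>\<^sup>+x. 1 \<partial>?X)"
      by (intro nn_integral_cong) (simp add: int1 e_def)
    also have "\<dots> = 1" using Xp.emeasure_space_1 by simp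
    finally show ?thesis using mono by (simp add: mult_left_mono)
  qed
  have TGeq: "(\<integral>\<^sup>+x. (\<integral>\<^sup>+h. e h x * gI h x \<partial>Pr) \<partial>?X) =
     (\<integral>\<^sup>+x. (\<integral>\<^sup>+h. ennreal (exp (g h x)) *
            indicator {h \<in> space Pr. gen_gap M n h x \<le> 2 * sqrt (hvar M h * (c\<^sup>2 + ln (1 / \<delta>) / real n))
                           + b * (c\<^sup>2 + ln (1 / \<delta>) / real n)} h \<partial>Pr) \<partial>?X)"
    by (intro nn_integral_cong) (simp add: e_def gI_def R_def A_def L_def split: split_indicator)
  have "ennreal (1 - \<delta>) + ennreal \<delta> = 1" using \<delta> by (subst ennreal_plus[symmetric]) auto
  also have "1 \<le> (\<integral>\<^sup>+x. (\<integral>\<^sup>+h. e h x * gI h x \<partial>Pr) \<partial>?X) + ennreal \<delta>"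
    using TG_TB add_left_mono[OF TB, of "(\<integral>\<^sup>+x. (\<integral>\<^sup>+h. e h x * gI h x \<partial>Pr) \<partial>?X)"] by simp
  finally have "ennreal (1 - \<delta>) \<le> (\<integral>\<^sup>+x. (\<integral>\<^sup>+h. e h x * gI h x \<partial>Pr) \<partial>?X)"
    by (simp add: ennreal_add_left_cancel_le add.commute)
  hence main: "ennreal (1 - \<delta>) \<le> (\<integral>\<^sup>+x. (\<integral>\<^sup>+h. ennreal (exp (g h x)) *
            indicator {h \<in> space Pr. gen_gap M n h x \<le> 2 * sqrt (hvar M h * (c\<^sup>2 + ln (1 / \<delta>) / real n))
                           + b * (c\<^sup>2 + ln (1 / \<delta>) / real n)} h \<partial>Pr) \<partial>?X)" unfolding TGeq .
  have "{h \<in> space Pr. gen_gap M n h x \<le> R h} \<in> sets Pr" if x: "x \<in> space ?X" for x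
    using slice[OF gapm x] Rm by measurable
  hence "\<forall>x\<in>space ?X. {h \<in> space Pr. gen_gap M n h x \<le> 2 * sqrt (hvar M h * (c\<^sup>2 + ln (1 / \<delta>) / real n))
                           + b * (c\<^sup>2 + ln (1 / \<delta>) / real n)} \<in> sets Pr"
    by (simp add: R_def A_def L_def)
  with main show ?thesis by blast
qed


theorem theorem6:
  fixes M :: "'x measure" and Pr :: "('x \<Rightarrow> real) measure" and n :: nat
    and Q :: "(nat \<Rightarrow> 'x) \<Rightarrow> ('x \<Rightarrow> real) measure"
    and H :: "('x \<Rightarrow> real) \<Rightarrow> (nat \<Rightarrow> 'x) \<Rightarrow> real"
    and b c \<delta> :: real
  assumes "prob_space M"
    and "n > 0"
    and hyp_meas: "(\<lambda>(h, z). h z) \<in> borel_measurable (Pr \<Otimes>\<^sub>M M)"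
    and "abs_cont_algorithm Pr (sample_space M n) Q"
    and "is_hamiltonian Pr (sample_space M n) Q H"
    and bdiff: "\<And>k h y y' x. k < n \<Longrightarrow> h \<in> space Pr \<Longrightarrow> y \<in> space M \<Longrightarrow> y' \<in> space M \<Longrightarrow>
               x \<in> space (sample_space M n) \<Longrightarrow> H h (x(k := y)) - H h (x(k := y')) \<le> c"
    and brange: "\<And>h y. h \<in> space Pr \<Longrightarrow> y \<in> space M \<Longrightarrow> 0 \<le> h y \<and> h y \<le> b"
    and "\<delta> > 0"
  shows "ennreal (1 - \<delta>) \<le>
    (\<integral>\<^sup>+ x. emeasure (Q x) {h \<in> space Pr.
        gen_gap M n h x \<le> 2 * sqrt (hvar M h * (c\<^sup>2 + ln (1 / \<delta>) / real n))
                           + b * (c\<^sup>2 + ln (1 / \<delta>) / real n)} \<partial>(sample_space M n))"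
proof -
  note M = assms(1) and n = assms(2) and \<delta>0 = assms(8)
  let ?X = "PiM {..<n} (\<lambda>_. M)"
  have Xe: "sample_space M n = ?X" by (simp add: sample_space_def)
  interpret Mp: prob_space M by fact
  have Xp: "prob_space ?X" by (rule prob_space_PiM) (use M in auto)
  interpret Xp: prob_space ?X by fact
  have Qp: "prob_space (Q x)" and Qs: "sets (Q x) = sets Pr" if "x \<in> space ?X" for x
    using assms(4) that by (auto simp: abs_cont_algorithm_def stochastic_algorithm_def Xe)
  have Hm: "(\<lambda>p. H (fst p) (snd p)) \<in> borel_measurable (Pr \<Otimes>\<^sub>M ?X)"
    using assms(5) by (simp add: is_hamiltonian_def Xe split_beta')
  have Qd: "Q x = density Pr (\<lambda>h. ennreal (exp (H h x)) / Zfun Pr H x)" if "x \<in> space ?X" for x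
    using assms(5) that by (simp add: is_hamiltonian_def Xe)
  have bdiff': "H h (x(k := y)) - H h (x(k := y')) \<le> c"
    if "k < n" "h \<in> space Pr" "y \<in> space M" "y' \<in> space M" "x \<in> space ?X" for k h y y' x
    using bdiff[of k h y y' x] that Xe by simp
  obtain x0 where x0: "x0 \<in> space ?X" using Xp.not_empty by blast
  have spN: "x(k := y) \<in> space ?X" if "x \<in> space ?X" "y \<in> space M" "k < n" for x y k
  proof -
    have "x(k := y) \<in> PiE (insert k {..<n}) (\<lambda>_. space M)"
      using that by (intro PiE_fun_upd) (auto simp: space_PiM)
    thus ?thesis using that by (simp add: space_PiM insert_absorb)
  qed
  have Hx: "(\<lambda>h. H h x) \<in> borel_measurable Pr" if "x \<in> space ?X" for x
    using measurable_compose[OF measurable_Pair2'[OF that] Hm] by simp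
  have spQ: "space (Q x) = space Pr" if "x \<in> space ?X" for x
    using sets_eq_imp_space_eq[OF Qs[OF that]] .
  show ?thesis
  proof (cases "\<delta> < 1")
    case False
    hence "ennreal (1 - \<delta>) = 0" by (simp add: ennreal_eq_0_iff)
    thus ?thesis by simp
  next
    case True
    note \<delta> = \<delta>0 True
    have Pne: "space Pr \<noteq> {}"
      using prob_space.not_empty[OF Qp[OF x0]] spQ[OF x0] by simp
    then obtain h0 where h0: "h0 \<in> space Pr" by blast
    obtain y0 where y0: "y0 \<in> space M" using Mp.not_empty by blast
    have b0: "0 \<le> b" using brange[OF h0 y0] by simp
    define Z where "Z x = Zfun Pr H x" for x
    have Q1: "(\<integral>\<^sup>+h. ennreal (exp (H h x)) / Z x \<partial>Pr) = 1" if x: "x \<in> space ?X" for x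
    proof -
      have "1 = emeasure (Q x) (space (Q x))" using prob_space.emeasure_space_1[OF Qp[OF x]] by simp
      also have "\<dots> = emeasure (density Pr (\<lambda>h. ennreal (exp (H h x)) / Zfun Pr H x)) (space Pr)"
        using Qd[OF x] spQ[OF x] by simp
      also have "\<dots> = (\<integral>\<^sup>+h. ennreal (exp (H h x)) / Z x * indicator (space Pr) h \<partial>Pr)"
        by (subst emeasure_density) (use Hx[OF x] in \<open>auto simp: Z_def\<close>)
      also have "\<dots> = (\<integral>\<^sup>+h. ennreal (exp (H h x)) / Z x \<partial>Pr)"
        by (intro nn_integral_cong) auto
      finally show ?thesis by simp
    qed
    have Zfin: "Z x \<noteq> 0 \<and> Z x \<noteq> \<top>" if x: "x \<in> space ?X" for x
    proof -
      have "(\<integral>\<^sup>+h. ennreal (exp (H h x)) / Z x \<partial>Pr) = Z x / Z x"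
        by (subst nn_integral_divide) (use Hx[OF x] in \<open>auto simp: Z_def Zfun_def\<close>)
      hence "Z x / Z x = 1" using Q1[OF x] by simp
      thus ?thesis by (cases "Z x = 0"; cases "Z x = \<top>") auto
    qed
    define z where "z x = enn2real (Z x)" for x
    have zpos: "0 < z x" and Zz: "Z x = ennreal (z x)" if x: "x \<in> space ?X" for x
      using Zfin[OF x] by (auto simp: z_def enn2real_positive_iff less_top zero_less_iff_neq_zero)
    define g where "g h x = H h x - ln (z x)" for h x
    have dens: "ennreal (exp (H h x)) / Z x = ennreal (exp (g h x))" if x: "x \<in> space ?X" for h x
      using zpos[OF x] by (simp add: Zz[OF x] divide_ennreal g_def exp_diff)
    have int1: "(\<integral>\<^sup>+h. ennreal (exp (g h x)) \<partial>Pr) = 1" if x: "x \<in> space ?X" for x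
      using Q1[OF x] by (simp add: dens[OF x])
    have gx0m: "(\<lambda>h. g h x0) \<in> borel_measurable Pr" unfolding g_def using Hx[OF x0] by measurable
    define Ak where "Ak k = {h \<in> space Pr. 1 / real (Suc k) \<le> exp (g h x0)}" for k
    have Akm: "Ak k \<in> sets Pr" for k unfolding Ak_def using gx0m by measurable
    have Akf: "emeasure Pr (Ak k) \<noteq> \<infinity>" for k
    proof -
      have "emeasure Pr (Ak k) = (\<integral>\<^sup>+h. indicator (Ak k) h \<partial>Pr)" using Akm by simp
      also have "\<dots> \<le> (\<integral>\<^sup>+h. ennreal (real (Suc k)) * ennreal (exp (g h x0)) \<partial>Pr)"
      proof (intro nn_integral_mono)
        fix h assume "h \<in> space Pr"
        show "indicator (Ak k) h \<le> ennreal (real (Suc k)) * ennreal (exp (g h x0))"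
        proof (cases "h \<in> Ak k")
          case True
          hence "1 / real (Suc k) \<le> exp (g h x0)" by (simp add: Ak_def)
          hence "1 \<le> real (Suc k) * exp (g h x0)" by (simp add: field_simps)
          thus ?thesis using True by (simp add: ennreal_mult[symmetric] ennreal_leI del: of_nat_Suc)
        qed simp
      qed
      also have "\<dots> = ennreal (real (Suc k)) * (\<integral>\<^sup>+h. ennreal (exp (g h x0)) \<partial>Pr)"
        by (rule nn_integral_cmult) (use gx0m in measurable)
      also have "\<dots> = ennreal (real (Suc k))" using int1[OF x0] by simp
      finally show ?thesis by (auto simp: top_unique)
    qed
    have Akcov: "(\<Union>k. Ak k) = space Pr"
    proof
      show "(\<Union>k. Ak k) \<subseteq> space Pr" by (auto simp: Ak_def)
      show "space Pr \<subseteq> (\<Union>k. Ak k)"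
      proof
        fix h assume h: "h \<in> space Pr"
        obtain k where "inverse (real (Suc k)) < exp (g h x0)"
          using reals_Archimedean[of "exp (g h x0)"] by auto
        hence "h \<in> Ak k" using h by (simp add: Ak_def inverse_eq_divide)
        thus "h \<in> (\<Union>k. Ak k)" by blast
      qed
    qed
    have sfPr: "sigma_finite_measure Pr"
      unfolding sigma_finite_measure_def
      by (intro exI[of _ "range Ak"]) (use Akm Akf Akcov in auto)
    interpret sfPr: sigma_finite_measure Pr by fact
    have Zm: "Z \<in> borel_measurable ?X"
    proof -
      have "(\<lambda>p. ennreal (exp (H (fst p) (snd p)))) \<in> borel_measurable (Pr \<Otimes>\<^sub>M ?X)" using Hm by measurable
      hence "(\<lambda>(x, h). ennreal (exp (H h x))) \<in> borel_measurable (?X \<Otimes>\<^sub>M Pr)"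
        using measurable_pair_swap_iff[of "\<lambda>p. ennreal (exp (H (fst p) (snd p)))" Pr ?X borel]
        by (simp add: split_beta')
      hence "(\<lambda>x. \<integral>\<^sup>+h. ennreal (exp (H h x)) \<partial>Pr) \<in> borel_measurable ?X"
        by (rule sfPr.borel_measurable_nn_integral)
      moreover have "Z = (\<lambda>x. \<integral>\<^sup>+h. ennreal (exp (H h x)) \<partial>Pr)"
        by (rule ext) (simp add: Z_def Zfun_def)
      ultimately show ?thesis by simp
    qed
    have zm: "z \<in> borel_measurable ?X" unfolding z_def using Zm by measurable
    have gm: "(\<lambda>p. g (fst p) (snd p)) \<in> borel_measurable (Pr \<Otimes>\<^sub>M ?X)"
      unfolding g_def using Hm zm by measurable
    have zd: "ln (z (x(k := y'))) - ln (z (x(k := y))) \<le> c"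
      if "k < n" "x \<in> space ?X" "y \<in> space M" "y' \<in> space M" for k x y y'
    proof -
      have x1: "x(k := y) \<in> space ?X" and x2: "x(k := y') \<in> space ?X" using spN that by auto
      have "Z (x(k := y')) = (\<integral>\<^sup>+h. ennreal (exp (H h (x(k := y')))) \<partial>Pr)" by (simp add: Z_def Zfun_def)
      also have "\<dots> \<le> (\<integral>\<^sup>+h. ennreal (exp c) * ennreal (exp (H h (x(k := y)))) \<partial>Pr)"
      proof (intro nn_integral_mono)
        fix h assume h: "h \<in> space Pr"
        have "H h (x(k := y')) - H h (x(k := y)) \<le> c" by (rule bdiff'[OF that(1) h that(4) that(3) that(2)])
        hence "exp (H h (x(k := y'))) \<le> exp c * exp (H h (x(k := y)))" by (simp add: exp_add[symmetric])
        thus "ennreal (exp (H h (x(k := y')))) \<le> ennreal (exp c) * ennreal (exp (H h (x(k := y))))"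
          by (simp add: ennreal_mult[symmetric] ennreal_leI)
      qed
      also have "\<dots> = ennreal (exp c) * Z (x(k := y))"
        by (subst nn_integral_cmult) (use Hx[OF x1] in \<open>auto simp: Z_def Zfun_def\<close>)
      finally have "ennreal (z (x(k := y'))) \<le> ennreal (exp c * z (x(k := y)))"
        using Zz[OF x1] Zz[OF x2] zpos[OF x1] by (simp add: ennreal_mult)
      hence le: "z (x(k := y')) \<le> exp c * z (x(k := y))"
        using zpos[OF x1] by (simp add: ennreal_le_iff)
      have "ln (z (x(k := y'))) \<le> ln (exp c * z (x(k := y)))"
        using le zpos[OF x1] zpos[OF x2] by simp
      also have "\<dots> = c + ln (z (x(k := y)))" using zpos[OF x1] by (simp add: ln_mult)
      finally show ?thesis by simp
    qed
    have gd: "g h (x(k := y)) - g h (x(k := y')) \<le> 2 * c"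
      if "h \<in> space Pr" "k < n" "x \<in> space ?X" "y \<in> space M" "y' \<in> space M" for h k x y y'
      using bdiff'[OF that(2) that(1) that(4) that(5) that(3)] zd[OF that(2) that(3) that(4) that(5)]
      by (simp add: g_def)
    show ?thesis
    proof (cases "b = 0")
      case True
      have A0: "0 \<le> c\<^sup>2 + ln (1 / \<delta>) / real n" using \<delta> by simp
      have "emeasure (Q x) {h \<in> space Pr. gen_gap M n h x \<le> 2 * sqrt (hvar M h * (c\<^sup>2 + ln (1 / \<delta>) / real n))
                           + b * (c\<^sup>2 + ln (1 / \<delta>) / real n)} = 1" if x: "x \<in> space ?X" for x
      proof -
        have "{h \<in> space Pr. gen_gap M n h x \<le> 2 * sqrt (hvar M h * (c\<^sup>2 + ln (1 / \<delta>) / real n))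
                           + b * (c\<^sup>2 + ln (1 / \<delta>) / real n)} = space Pr"
        proof (intro set_eqI iffI)
          fix h assume h: "h \<in> space Pr"
          have h0: "h y = 0" if "y \<in> space M" for y using brange[OF h that] True by simp
          have "(\<integral>z. h z \<partial>M) = (\<integral>z. 0 \<partial>M)" by (rule Bochner_Integration.integral_cong) (auto simp: h0)
          moreover have "(\<Sum>i<n. h (x i)) = 0" using x by (auto intro!: sum.neutral h0 simp: space_PiM)
          ultimately have gg: "gen_gap M n h x = 0" by (simp add: gen_gap_def)
          have "0 \<le> hvar M h" unfolding hvar_def by (rule Bochner_Integration.integral_nonneg) auto
          hence "0 \<le> sqrt (hvar M h * (c\<^sup>2 + ln (1 / \<delta>) / real n))" using A0 by simp
          thus "h \<in> {h \<in> space Pr. gen_gap M n h x \<le> 2 * sqrt (hvar M h * (c\<^sup>2 + ln (1 / \<delta>) / real n))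
                           + b * (c\<^sup>2 + ln (1 / \<delta>) / real n)}" using h gg True by simp
        qed auto
        thus ?thesis using prob_space.emeasure_space_1[OF Qp[OF x]] spQ[OF x] by simp
      qed
      hence "(\<integral>\<^sup>+ x. emeasure (Q x) {h \<in> space Pr.
        gen_gap M n h x \<le> 2 * sqrt (hvar M h * (c\<^sup>2 + ln (1 / \<delta>) / real n))
                           + b * (c\<^sup>2 + ln (1 / \<delta>) / real n)} \<partial>?X) = (\<integral>\<^sup>+x. 1 \<partial>?X)"
        by (intro nn_integral_cong) simp
      also have "\<dots> = 1" using Xp.emeasure_space_1 by simp
      finally show ?thesis using \<delta> by (simp add: Xe ennreal_leI)
    next
      case False
      hence b: "0 < b" using b0 by simp
      have CC: "(\<forall>x\<in>space ?X. {h \<in> space Pr. gen_gap M n h x \<le> 2 * sqrt (hvar M h * (c\<^sup>2 + ln (1 / \<delta>) / real n))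
                           + b * (c\<^sup>2 + ln (1 / \<delta>) / real n)} \<in> sets Pr) \<and>
          ennreal (1 - \<delta>) \<le> (\<integral>\<^sup>+x. (\<integral>\<^sup>+h. ennreal (exp (g h x)) *
            indicator {h \<in> space Pr. gen_gap M n h x \<le> 2 * sqrt (hvar M h * (c\<^sup>2 + ln (1 / \<delta>) / real n))
                           + b * (c\<^sup>2 + ln (1 / \<delta>) / real n)} h \<partial>Pr) \<partial>?X)"
        by (rule core; (rule M n hyp_meas sfPr gm int1 gd brange b \<delta> | assumption)+)
      then have S: "\<forall>x\<in>space ?X. {h \<in> space Pr. gen_gap M n h x \<le> 2 * sqrt (hvar M h * (c\<^sup>2 + ln (1 / \<delta>) / real n))
                           + b * (c\<^sup>2 + ln (1 / \<delta>) / real n)} \<in> sets Pr"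
        and C: "ennreal (1 - \<delta>) \<le> (\<integral>\<^sup>+x. (\<integral>\<^sup>+h. ennreal (exp (g h x)) *
            indicator {h \<in> space Pr. gen_gap M n h x \<le> 2 * sqrt (hvar M h * (c\<^sup>2 + ln (1 / \<delta>) / real n))
                           + b * (c\<^sup>2 + ln (1 / \<delta>) / real n)} h \<partial>Pr) \<partial>?X)"
        by auto
      note C
      also have "\<dots> = (\<integral>\<^sup>+ x. emeasure (Q x) {h \<in> space Pr.
        gen_gap M n h x \<le> 2 * sqrt (hvar M h * (c\<^sup>2 + ln (1 / \<delta>) / real n))
                           + b * (c\<^sup>2 + ln (1 / \<delta>) / real n)} \<partial>?X)"
      proof (intro nn_integral_cong)
        fix x assume x: "x \<in> space ?X"
        have gxm: "(\<lambda>h. exp (g h x)) \<in> borel_measurable Pr" unfolding g_def using Hx[OF x] by measurable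
        show "(\<integral>\<^sup>+h. ennreal (exp (g h x)) *
            indicator {h \<in> space Pr. gen_gap M n h x \<le> 2 * sqrt (hvar M h * (c\<^sup>2 + ln (1 / \<delta>) / real n))
                           + b * (c\<^sup>2 + ln (1 / \<delta>) / real n)} h \<partial>Pr) = emeasure (Q x) {h \<in> space Pr.
        gen_gap M n h x \<le> 2 * sqrt (hvar M h * (c\<^sup>2 + ln (1 / \<delta>) / real n))
                           + b * (c\<^sup>2 + ln (1 / \<delta>) / real n)}"
          unfolding Qd[OF x]
          by (subst emeasure_density) (use Hx[OF x] S x gxm in \<open>auto simp: dens[OF x] Z_def[symmetric]\<close>)
      qed
      finally show ?thesis by (simp add: Xe)
    qed
  qed
qed
end
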